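(* Let $m\ge 2$, let $n_1,\dots,n_m\ge 3$ be odd, and let $\mathcal{C}=\mathcal{C}(C_{n_1},\dots,C_{n_m})$ be the odd chain cycle. Let $V_1=\{v^2_1,\dots,v^m_1\}$ and $V_2=V(\mathcal{C})\setminus V_1$ (so each vertex of $V_2$ has a unique name $v^i_j$ and lies in exactly one cycle $C_{n_i}$). Let $v^i_j,v^k_l\in V_2$ be distinct. (a) If $i=k$, then $v^i_j$ and $v^i_l$ are mutually maximally distant in $\mathcal{C}$ if and only if $d(v^i_j,v^i_l)=(n_i-1)/2$ (the diameter of $C_{n_i}$). (b) Suppose $i<k$. Then: (1) if $i=1$ and $k=m$: $v^1_j$ and $v^m_l$ are mutually maximally distant iff $j\in\{1,2\}$ and $l\in\{\frac{n_m+1}{2},\frac{n_m+1}{2}+1\}$; (2) if $i=1$ and $2\le k\le m-1$: $v^1_j$ and $v^k_l$ are mutually maximally distant iff $j\in\{1,2\}$ and $l=\frac{n_k+1}{2}$; (3) if $2\le i\le m-1$ and $k=m$: $v^i_j$ and $v^m_l$ are mutually maximally distant iff $j=2$ and $l\in\{\frac{n_m+1}{2},\frac{n_m+1}{2}+1\}$; (4) if $2\le i<k\le m-1$: $v^i_j$ and $v^k_l$ are mutually maximally distant iff $j=2$ and $l=\frac{n_k+1}{2}$.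
   Context: Let $C_{n_1},\dots,C_{n_m}$ be pairwise disjoint cycles, $V(C_{n_i})=\{v^i_1,\dots,v^i_{n_i}\}$ with $v^i_j$ adjacent to $v^i_{j+1}$ (indices mod $n_i$). The odd chain cycle $\mathcal{C}(C_{n_1},\dots,C_{n_m})$ (all $n_i$ odd) is obtained by identifying $v^i_{(n_i+1)/2+1}$ with $v^{i+1}_1$ for each $i=1,\dots,m-1$; the identified vertex carries both names. A vertex $u$ is maximally distant from $v$ if every neighbor $w$ of $u$ satisfies $d(v,w)\le d(u,v)$; $u,v$ are mutually maximally distant if each is maximally distant from the other. *)

theory Defs
  imports Main
begin

definition gdist :: "('a \<Rightarrow> 'a \<Rightarrow> bool) \<Rightarrow> 'a \<Rightarrow> 'a \<Rightarrow> nat" where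
  "gdist E u v = (LEAST k. (E ^^ k) u v)"

definition max_distant :: "('a \<Rightarrow> 'a \<Rightarrow> bool) \<Rightarrow> 'a \<Rightarrow> 'a \<Rightarrow> bool" where
  "max_distant E u v \<longleftrightarrow> (\<forall>w. E u w \<longrightarrow> gdist E v w \<le> gdist E u v)"

definition mutually_max_distant :: "('a \<Rightarrow> 'a \<Rightarrow> bool) \<Rightarrow> 'a \<Rightarrow> 'a \<Rightarrow> bool" where
  "mutually_max_distant E u v \<longleftrightarrow> max_distant E u v \<and> max_distant E v u"

text \<open>Vertex v^i_j is encoded as the pair (i,j), 1 \<le> i \<le> m, 1 \<le> j \<le> n i.
  The identified vertex v^i_{(n_i+1)/2+1} = v^{i+1}_1 is represented canonically by
  the pair (i, (n i + 1) div 2 + 1).\<close>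

definition canon :: "(nat \<Rightarrow> nat) \<Rightarrow> nat \<times> nat \<Rightarrow> nat \<times> nat" where
  "canon n p = (if 2 \<le> fst p \<and> snd p = 1
                then (fst p - 1, (n (fst p - 1) + 1) div 2 + 1) else p)"

definition chain_adj :: "nat \<Rightarrow> (nat \<Rightarrow> nat) \<Rightarrow> nat \<times> nat \<Rightarrow> nat \<times> nat \<Rightarrow> bool" where
  "chain_adj m n u v \<longleftrightarrow>
     (\<exists>i\<in>{1..m}. \<exists>j\<in>{1..n i}.
        (u = canon n (i, j) \<and> v = canon n (i, j mod n i + 1)) \<or>
        (v = canon n (i, j) \<and> u = canon n (i, j mod n i + 1)))"

text \<open>The vertices of V_2 (those with a unique name v^i_j).\<close>
definition in_V2 :: "nat \<Rightarrow> (nat \<Rightarrow> nat) \<Rightarrow> nat \<times> nat \<Rightarrow> bool" where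
  "in_V2 m n p \<longleftrightarrow> 1 \<le> fst p \<and> fst p \<le> m \<and> 1 \<le> snd p \<and> snd p \<le> n (fst p)
     \<and> \<not> (2 \<le> fst p \<and> snd p = 1)
     \<and> \<not> (fst p \<le> m - 1 \<and> snd p = (n (fst p) + 1) div 2 + 1)"

end

theory Submission
  imports Defs
begin

definition cd :: "nat \<Rightarrow> nat \<Rightarrow> nat \<Rightarrow> nat" where
  "cd N a b = min (if a \<le> b then b - a else a - b) (N - (if a \<le> b then b - a else a - b))"
definition off :: "nat \<Rightarrow> nat \<Rightarrow> nat \<Rightarrow> nat" where
  "off N a j = (if a \<le> j then j - a else j + N - a)"
lemma cd_off:
  assumes "1 \<le> a" "a \<le> N" "1 \<le> j" "j \<le> N"
  shows "cd N a j = min (off N a j) (N - off N a j)"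
proof (cases "a \<le> j")
  case True thus ?thesis unfolding cd_def off_def by simp
next
  case False
  then have "N - (j+N-a) = a - j" "N - (a-j) = j+N-a" using assms by auto
  thus ?thesis using False unfolding cd_def off_def by (simp add: min.commute)
qed
lemma off_lt: "1 \<le> a \<Longrightarrow> a \<le> N \<Longrightarrow> 1 \<le> j \<Longrightarrow> j \<le> N \<Longrightarrow> off N a j < N"
  unfolding off_def by auto
lemma off_succ: "1 \<le> a \<Longrightarrow> a \<le> N \<Longrightarrow> 1 \<le> j \<Longrightarrow> j \<le> N \<Longrightarrow>
   off N a (if j = N then 1 else j + 1) = (if off N a j = N - 1 then 0 else off N a j + 1)"
  unfolding off_def by (cases "j = N"; cases "a \<le> j"; cases "a = j + 1"; simp; linarith?)
lemma off_pred: "1 \<le> a \<Longrightarrow> a \<le> N \<Longrightarrow> 1 \<le> j \<Longrightarrow> j \<le> N \<Longrightarrow>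
   off N a (if j = 1 then N else j - 1) = (if off N a j = 0 then N - 1 else off N a j - 1)"
  unfolding off_def by (cases "j = 1"; cases "a \<le> j"; cases "a = j"; simp; linarith?)
lemma md_t: "(t::nat) < N \<Longrightarrow> N = 2*q+1 \<Longrightarrow>
   (min (if t = N - 1 then 0 else t + 1) (N - (if t = N - 1 then 0 else t + 1)) \<le> min t (N - t) \<and>
    min (if t = 0 then N - 1 else t - 1) (N - (if t = 0 then N - 1 else t - 1)) \<le> min t (N - t))
   \<longleftrightarrow> min t (N - t) = q"
  by (cases "t = 0"; cases "t = N - 1"; simp add: min_def; linarith?)

lemma cd_sym: "cd N a b = cd N b a"
  unfolding cd_def by auto

lemma cd_self[simp]: "cd N a a = 0"
  unfolding cd_def by auto

lemma oddN: fixes N :: nat assumes "odd N" "N \<ge> 3" obtains q where "N = 2*q+1" "q \<ge> 1" "(N+1) div 2 = q+1" "(N - 1) div 2 = q"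
proof -
  obtain q where q: "N = 2*q+1" using assms(1) oddE by blast
  then show ?thesis using that assms by simp
qed

lemma cd_port1:
  assumes "1 \<le> j" "j \<le> N" "odd N" "N \<ge> 3"
  shows "cd N ((N+1) div 2 + 1) j = (N - 1) div 2 \<longleftrightarrow> j \<in> {1,2}"
proof -
  obtain q where q: "N = 2*q+1" "q \<ge> 1" "(N+1) div 2 = q+1" "(N - 1) div 2 = q" using oddN assms(3,4) by blast
  have "cd N (q + 1 + 1) j = q \<longleftrightarrow> j \<in> {1,2}"
    using assms(1,2) q(1,2) unfolding cd_def by (cases "q + 2 \<le> j"; simp add: min_def; linarith?)
  then show ?thesis using q by simp
qed

lemma cd_port2:
  assumes "1 \<le> j" "j \<le> N" "odd N" "N \<ge> 3"
  shows "cd N 1 j = (N - 1) div 2 \<longleftrightarrow> j \<in> {(N+1) div 2, (N+1) div 2 + 1}"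
proof -
  obtain q where q: "N = 2*q+1" "q \<ge> 1" "(N+1) div 2 = q+1" "(N - 1) div 2 = q" using oddN assms(3,4) by blast
  have "cd N 1 j = q \<longleftrightarrow> j \<in> {q+1, q+1+1}"
    using assms(1,2) q(1,2) unfolding cd_def by (simp add: min_def; linarith?)
  then show ?thesis using q by simp
qed

lemma cd_half:
  assumes "odd N" "N \<ge> 3"
  shows "cd N 1 ((N+1) div 2 + 1) = (N - 1) div 2"
proof -
  obtain q where q: "N = 2*q+1" "q \<ge> 1" "(N+1) div 2 = q+1" "(N - 1) div 2 = q" using oddN assms by blast
  show ?thesis unfolding q(3,4) using q(1,2) unfolding cd_def by simp
qed

lemma lip_t: "(t::nat) < N \<Longrightarrow>
   min (if t = N - 1 then 0 else t + 1) (N - (if t = N - 1 then 0 else t + 1)) \<le> min t (N - t) + 1 \<and>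
   min t (N - t) \<le> min (if t = N - 1 then 0 else t + 1) (N - (if t = N - 1 then 0 else t + 1)) + 1"
  by (cases "t = N - 1"; simp add: min_def; linarith?)

lemma succ_eq: "1 \<le> (j::nat) \<Longrightarrow> j \<le> N \<Longrightarrow> j mod N + 1 = (if j = N then 1 else j + 1)"
  by (cases "j = N") auto

lemma half_valid:
  fixes N :: nat
  assumes "odd N" "N \<ge> 3" shows "2 \<le> (N + 1) div 2 + 1" "(N + 1) div 2 + 1 \<le> N"
proof -
  obtain q where "N = 2*q+1" "q \<ge> 1" "(N + 1) div 2 = q+1" using oddN[OF assms] by blast
  then show "2 \<le> (N + 1) div 2 + 1" "(N + 1) div 2 + 1 \<le> N" by simp_all
qed


lemma cd_lip:
  assumes "1 \<le> a" "a \<le> N" "1 \<le> j" "j \<le> N"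
  shows "cd N a (j mod N + 1) \<le> cd N a j + 1 \<and> cd N a j \<le> cd N a (j mod N + 1) + 1"
proof -
  have v: "1 \<le> (if j = N then 1 else j + 1)" "(if j = N then 1 else j + 1) \<le> N" using assms by auto
  show ?thesis
    unfolding succ_eq[OF assms(3,4)] cd_off[OF assms(1,2) v] cd_off[OF assms] off_succ[OF assms]
    using lip_t[OF off_lt[OF assms]] by simp
qed

lemma cd_maxdist:
  assumes "1 \<le> a" "a \<le> N" "1 \<le> j" "j \<le> N" "odd N" "N \<ge> 3"
  shows "(cd N a (j mod N + 1) \<le> cd N a j \<and> cd N a (if j = 1 then N else j - 1) \<le> cd N a j)
         \<longleftrightarrow> cd N a j = (N - 1) div 2"
proof -
  obtain q where q: "N = 2*q+1" "q \<ge> 1" "(N - 1) div 2 = q" using oddN assms(5,6) by blast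
  have v: "1 \<le> (if j = N then 1 else j + 1)" "(if j = N then 1 else j + 1) \<le> N" using assms by auto
  have w: "1 \<le> (if j = 1 then N else j - 1)" "(if j = 1 then N else j - 1) \<le> N" using assms by auto
  show ?thesis
    unfolding succ_eq[OF assms(3,4)] cd_off[OF assms(1,2) v] cd_off[OF assms(1-4)] off_succ[OF assms(1-4)]
      cd_off[OF assms(1,2) w] off_pred[OF assms(1-4)] q(3)
    using md_t[OF off_lt[OF assms(1-4)] q(1)] by simp
qed

definition S :: "(nat \<Rightarrow> nat) \<Rightarrow> nat \<Rightarrow> nat \<Rightarrow> nat" where
  "S n a b = (\<Sum>t=a..b. (n t - 1) div 2)"

lemma S_empty: "b < a \<Longrightarrow> S n a b = 0"
  unfolding S_def by simp

lemma S_snoc: "a \<le> Suc b \<Longrightarrow> S n a (Suc b) = S n a b + (n (Suc b) - 1) div 2"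
  unfolding S_def by simp

lemma S_cons: "a \<le> b \<Longrightarrow> S n a b = (n a - 1) div 2 + S n (Suc a) b"
  unfolding S_def by (simp add: sum.atLeast_Suc_atMost)

definition F :: "(nat \<Rightarrow> nat) \<Rightarrow> nat \<times> nat \<Rightarrow> nat \<times> nat \<Rightarrow> nat" where
  "F n s y = (if fst y = fst s then cd (n (fst s)) (snd s) (snd y)
     else if fst s < fst y then cd (n (fst s)) (snd s) ((n (fst s) + 1) div 2 + 1)
            + S n (fst s + 1) (fst y - 1) + cd (n (fst y)) 1 (snd y)
     else cd (n (fst s)) (snd s) 1 + S n (fst y + 1) (fst s - 1)
            + cd (n (fst y)) ((n (fst y) + 1) div 2 + 1) (snd y))"

definition port :: "(nat \<Rightarrow> nat) \<Rightarrow> nat \<times> nat \<Rightarrow> nat \<Rightarrow> nat" where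
  "port n s i = (if i = fst s then snd s else if fst s < i then 1 else (n i + 1) div 2 + 1)"

lemma F_port: "F n s (i, x) = F n s (i, port n s i) + cd (n i) (port n s i) x"
  unfolding F_def port_def by simp

lemma port_valid:
  assumes A: "\<forall>t\<in>{1..m}. odd (n t) \<and> n t \<ge> 3" and "1 \<le> i" "i \<le> m" "1 \<le> snd s" "snd s \<le> n (fst s)"
  shows "1 \<le> port n s i \<and> port n s i \<le> n i"
proof -
  have "odd (n i)" "n i \<ge> 3" using A assms by auto
  then obtain q where q: "n i = 2*q+1" "q \<ge> 1" "(n i + 1) div 2 = q+1" using oddN by blast
  show ?thesis using assms q unfolding port_def by auto
qed

lemma canon_simp: "canon n (i,j) = (if 2 \<le> i \<and> j = 1 then (i-1, (n(i-1)+1) div 2 + 1) else (i,j))"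
  by (simp add: canon_def)

lemma F_canon:
  assumes A: "\<forall>t\<in>{1..m}. odd (n t) \<and> n t \<ge> 3"
    and "1 \<le> k" "k \<le> m" "1 \<le> i" "i \<le> m" "1 \<le> j" "j \<le> n i"
  shows "F n (k,l) (canon n (i,j)) = F n (k,l) (i,j)"
proof (cases "2 \<le> i \<and> j = 1")
  case False
  then show ?thesis by (auto simp: canon_simp)
next
  case True
  then have c: "canon n (i,j) = (i-1, (n(i-1)+1) div 2 + 1)" and j1: "j = 1" by (simp_all add: canon_simp)
  have "i - 1 \<in> {1..m}" "i \<in> {1..m}" using assms True by auto
  then have ho: "odd (n (i-1))" "n (i-1) \<ge> 3" "odd (n i)" "n i \<ge> 3" using A by auto
  have half1: "cd (n (i-1)) 1 ((n (i-1) + 1) div 2 + 1) = (n (i-1) - 1) div 2" using cd_half ho by blast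
  have half2: "cd (n i) ((n i + 1) div 2 + 1) 1 = (n i - 1) div 2" using cd_half ho cd_sym by metis
  consider "i = k" | "k < i" "i - 1 = k" | "k < i - 1" | "i < k" using True by linarith
  then show ?thesis
  proof cases
    case 1
    then show ?thesis unfolding c F_def using True by (auto simp: S_empty)
  next
    case 2
    then show ?thesis unfolding c F_def using True by (simp add: S_empty)
  next
    case 3
    have e: "S n (k+1) (i-1) = S n (k+1) (i-2) + (n (i-1) - 1) div 2"
      using S_snoc[of "k+1" "i-2" n] 3 by (simp add: Suc_diff_Suc numeral_2_eq_2)
    show ?thesis unfolding c F_def using True 3 e half1 by (auto simp: numeral_2_eq_2)
  next
    case 4
    have e: "S n i (k-1) = (n i - 1) div 2 + S n (i+1) (k-1)"
      using S_cons[of i "k-1" n] 4 by simp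
    show ?thesis unfolding c F_def using True 4 e half2 by auto
  qed
qed

lemma adjE:
  assumes "chain_adj m n x y"
  obtains i j where "1 \<le> i" "i \<le> m" "1 \<le> j" "j \<le> n i"
    "(x = canon n (i,j) \<and> y = canon n (i, j mod n i + 1)) \<or> (y = canon n (i,j) \<and> x = canon n (i, j mod n i + 1))"
  using assms unfolding chain_adj_def by auto

lemma edge: "1 \<le> i \<Longrightarrow> i \<le> m \<Longrightarrow> 1 \<le> j \<Longrightarrow> j \<le> n i \<Longrightarrow>
  chain_adj m n (canon n (i,j)) (canon n (i, j mod n i + 1))"
proof -
  assume "1 \<le> i" "i \<le> m" "1 \<le> j" "j \<le> n i"
  then have "i \<in> {1..m}" "j \<in> {1..n i}" by auto
  then show ?thesis unfolding chain_adj_def by blast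
qed

lemma E_sym: "chain_adj m n x y \<Longrightarrow> chain_adj m n y x"
  unfolding chain_adj_def by blast

lemma pow_sym: "(chain_adj m n ^^ d) x y \<Longrightarrow> (chain_adj m n ^^ d) y x"
proof (induction d arbitrary: x y)
  case 0
  then show ?case by auto
next
  case (Suc d)
  from Suc.prems obtain z where "(chain_adj m n ^^ d) x z" "chain_adj m n z y" by (blast elim: relpowp_Suc_E)
  then show ?case using Suc.IH[of x z] E_sym[of m n z y] relpowp_Suc_I2[of "chain_adj m n" y z d x] by blast
qed

lemma F_lip:
  assumes A: "\<forall>t\<in>{1..m}. odd (n t) \<and> n t \<ge> 3" and "1 \<le> k" "k \<le> m" "1 \<le> l" "l \<le> n k"
    and "chain_adj m n x y"
  shows "F n (k,l) y \<le> F n (k,l) x + 1"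
proof -
  obtain i j where ij: "1 \<le> i" "i \<le> m" "1 \<le> j" "j \<le> n i"
    "(x = canon n (i,j) \<and> y = canon n (i, j mod n i + 1)) \<or> (y = canon n (i,j) \<and> x = canon n (i, j mod n i + 1))"
    using adjE[OF assms(6)] by blast
  have np: "n i > 0" using A ij by force
  have v: "1 \<le> j mod n i + 1" "j mod n i + 1 \<le> n i" using np by (auto simp: Suc_le_eq)
  have fx: "F n (k,l) (canon n (i,j)) = F n (k,l) (i,j)"
    "F n (k,l) (canon n (i,j mod n i + 1)) = F n (k,l) (i,j mod n i + 1)"
    using F_canon[OF A assms(2,3) ij(1-4)] F_canon[OF A assms(2,3) ij(1,2) v] by auto
  have pv: "1 \<le> port n (k,l) i" "port n (k,l) i \<le> n i" using port_valid[OF A ij(1,2), of "(k,l)"] assms by auto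
  have "cd (n i) (port n (k,l) i) (j mod n i + 1) \<le> cd (n i) (port n (k,l) i) j + 1 \<and>
        cd (n i) (port n (k,l) i) j \<le> cd (n i) (port n (k,l) i) (j mod n i + 1) + 1"
    using cd_lip[OF pv ij(3,4)] .
  then have "F n (k,l) (i, j mod n i + 1) \<le> F n (k,l) (i,j) + 1 \<and> F n (k,l) (i,j) \<le> F n (k,l) (i, j mod n i + 1) + 1"
    using F_port[of n "(k,l)" i "j mod n i + 1"] F_port[of n "(k,l)" i j] by linarith
  then show ?thesis using ij(5) fx by auto
qed

lemma lower:
  assumes A: "\<forall>t\<in>{1..m}. odd (n t) \<and> n t \<ge> 3" and "1 \<le> k" "k \<le> m" "1 \<le> l" "l \<le> n k"
  shows "(chain_adj m n ^^ d) (k,l) y \<Longrightarrow> F n (k,l) y \<le> d"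
proof (induction d arbitrary: y)
  case 0
  then show ?case by (simp add: F_def)
next
  case (Suc d)
  from Suc.prems obtain z where "(chain_adj m n ^^ d) (k,l) z" "chain_adj m n z y" by (blast elim: relpowp_Suc_E)
  then show ?case using Suc.IH F_lip[OF assms] by fastforce
qed

lemma fwd:
  assumes "1 \<le> i" "i \<le> m" "1 \<le> a" "a \<le> n i"
  shows "(chain_adj m n ^^ d) (canon n (i,a)) (canon n (i, (a - 1 + d) mod n i + 1))"
proof (induction d)
  case 0
  have "(a - 1) mod n i + 1 = a" using assms by simp
  then show ?case by simp
next
  case (Suc d)
  have np: "n i > 0" using assms by auto
  let ?j = "(a - 1 + d) mod n i + 1"
  have v: "1 \<le> ?j" "?j \<le> n i" using np by (auto simp: Suc_le_eq)
  have e: "?j mod n i + 1 = (a - 1 + Suc d) mod n i + 1" by (simp add: mod_Suc_eq)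
  show ?case using relpowp_Suc_I[OF Suc.IH edge[of i m "(a - 1 + d) mod n i + 1" n, OF assms(1,2) v]] e by simp
qed

lemma cyc_le:
  assumes "1 \<le> i" "i \<le> m" "1 \<le> a" "a \<le> b" "b \<le> n i"
  shows "(chain_adj m n ^^ cd (n i) a b) (canon n (i,a)) (canon n (i,b))"
proof (cases "b - a \<le> n i - (b - a)")
  case True
  then have c: "cd (n i) a b = b - a" unfolding cd_def using assms by simp
  have "(b - 1) mod n i + 1 = b" using assms by simp
  then have e: "(a - 1 + (b - a)) mod n i + 1 = b" using assms by simp
  show ?thesis using fwd[where i=i and m=m and a=a and n=n and d="b - a", OF assms(1,2,3)] assms unfolding c e by simp
next
  case False
  then have c: "cd (n i) a b = n i - (b - a)" unfolding cd_def using assms by simp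
  have "a - 1 < n i" using assms by simp
  then have "(n i + (a - 1)) mod n i = a - 1" by (metis mod_add_self1 mod_less)
  then have e2: "(n i + (a - 1)) mod n i + 1 = a" using assms by simp
  have e1: "b - 1 + (n i - (b - a)) = n i + (a - 1)" using assms by linarith
  have e: "(b - 1 + (n i - (b - a))) mod n i + 1 = a" by (simp only: e1 e2)
  show ?thesis using pow_sym[OF fwd[where i=i and m=m and a=b and n=n and d="n i - (b - a)", OF assms(1,2)]] assms unfolding c e by simp
qed

lemma cyc:
  assumes "1 \<le> i" "i \<le> m" "1 \<le> a" "a \<le> n i" "1 \<le> b" "b \<le> n i"
  shows "(chain_adj m n ^^ cd (n i) a b) (canon n (i,a)) (canon n (i,b))"
proof (cases "a \<le> b")
  case True
  then show ?thesis using cyc_le assms by blast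
next
  case False
  then have "(chain_adj m n ^^ cd (n i) b a) (canon n (i,b)) (canon n (i,a))" using cyc_le[OF assms(1,2,5), of a] assms by simp
  then show ?thesis using pow_sym cd_sym by metis
qed

lemma chain_walk:
  assumes A: "\<forall>t\<in>{1..m}. odd (n t) \<and> n t \<ge> 3" and "1 \<le> k"
  shows "k + 1 + d \<le> m \<Longrightarrow> (chain_adj m n ^^ S n (k+1) (k+d)) (canon n (k+1,1)) (canon n (k+1+d,1))"
proof (induction d)
  case 0
  then show ?case by (simp add: S_empty)
next
  case (Suc d)
  let ?i = "k + 1 + d"
  have ho: "odd (n ?i)" "n ?i \<ge> 3" using A Suc.prems assms by auto
  have h: "cd (n ?i) 1 ((n ?i + 1) div 2 + 1) = (n ?i - 1) div 2" using cd_half ho by blast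
  have v: "(n ?i + 1) div 2 + 1 \<le> n ?i"
  proof -
    obtain q where "n ?i = 2*q+1" "q \<ge> 1" "(n ?i + 1) div 2 = q+1" using oddN[OF ho] by blast
    then show ?thesis by simp
  qed
  have w: "(chain_adj m n ^^ cd (n ?i) 1 ((n ?i + 1) div 2 + 1)) (canon n (?i,1)) (canon n (?i,(n ?i + 1) div 2 + 1))"
    using cyc[of ?i m 1 n "(n ?i + 1) div 2 + 1"] Suc.prems v by simp
  have c: "canon n (?i,(n ?i + 1) div 2 + 1) = canon n (k + 1 + Suc d, 1)" using half_valid[OF ho] by (simp add: canon_simp)
  have s: "S n (k+1) (k + Suc d) = S n (k+1) (k+d) + (n ?i - 1) div 2"
    using S_snoc[of "k+1" "k+d" n] by simp
  show ?case using relpowp_trans[OF Suc.IH w] Suc.prems unfolding s h c by simp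
qed


lemma upper:
  assumes A: "\<forall>t\<in>{1..m}. odd (n t) \<and> n t \<ge> 3" and k: "1 \<le> k" "k \<le> m" "1 \<le> l" "l \<le> n k"
    and ck: "canon n (k,l) = (k,l)" and ij: "1 \<le> i" "i \<le> m" "1 \<le> j" "j \<le> n i"
  shows "(chain_adj m n ^^ F n (k,l) (i,j)) (k,l) (canon n (i,j))"
proof -
  have hk: "odd (n k)" "n k \<ge> 3" using A k by auto
  have hi: "odd (n i)" "n i \<ge> 3" using A ij by auto
  consider "i = k" | "k < i" | "i < k" by linarith
  then show ?thesis
  proof cases
    case 1
    then show ?thesis using cyc[where i=k and m=m and n=n and a=l and b=j] k ij ck unfolding F_def by simp
  next
    case 2
    let ?h = "(n k + 1) div 2 + 1"
    have w1: "(chain_adj m n ^^ cd (n k) l ?h) (k,l) (canon n (k+1,1))"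
      using cyc[where i=k and m=m and n=n and a=l and b="?h"] k half_valid[OF hk] ck by (simp add: canon_simp)
    have w2: "(chain_adj m n ^^ S n (k+1) (i-1)) (canon n (k+1,1)) (canon n (i,1))"
      using chain_walk[OF A k(1), of "i - k - 1"] 2 ij by simp
    have w3: "(chain_adj m n ^^ cd (n i) 1 j) (canon n (i,1)) (canon n (i,j))"
      using cyc[where i=i and m=m and n=n and a=1 and b=j] ij hi by simp
    show ?thesis using relpowp_trans[OF relpowp_trans[OF w1 w2] w3] 2 unfolding F_def by simp
  next
    case 3
    let ?h = "(n i + 1) div 2 + 1"
    have w1: "(chain_adj m n ^^ cd (n k) l 1) (k,l) (canon n (k,1))"
      using cyc[where i=k and m=m and n=n and a=l and b=1] k hk ck by simp
    have w2: "(chain_adj m n ^^ S n (i+1) (k-1)) (canon n (k,1)) (canon n (i+1,1))"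
      using pow_sym[OF chain_walk[OF A ij(1), of "k - i - 1"]] 3 k by simp
    have w3: "(chain_adj m n ^^ cd (n i) ?h j) (canon n (i+1,1)) (canon n (i,j))"
      using cyc[where i=i and m=m and n=n and a="?h" and b=j] ij half_valid[OF hi] by (simp add: canon_simp)
    show ?thesis using relpowp_trans[OF relpowp_trans[OF w1 w2] w3] 3 unfolding F_def by simp
  qed
qed

lemma gdist_F:
  assumes A: "\<forall>t\<in>{1..m}. odd (n t) \<and> n t \<ge> 3" and k: "1 \<le> k" "k \<le> m" "1 \<le> l" "l \<le> n k"
    and ck: "canon n (k,l) = (k,l)" and ij: "1 \<le> i" "i \<le> m" "1 \<le> j" "j \<le> n i"
  shows "gdist (chain_adj m n) (k,l) (canon n (i,j)) = F n (k,l) (i,j)"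
  unfolding gdist_def
proof (rule Least_equality)
  show "(chain_adj m n ^^ F n (k,l) (i,j)) (k,l) (canon n (i,j))" using upper[OF assms] .
next
  fix d assume "(chain_adj m n ^^ d) (k,l) (canon n (i,j))"
  then have "F n (k,l) (canon n (i,j)) \<le> d" using lower[OF A k] by blast
  then show "F n (k,l) (i,j) \<le> d" using F_canon[OF A k(1,2) ij] by simp
qed

lemma gdist_sym: "gdist (chain_adj m n) x y = gdist (chain_adj m n) y x"
  unfolding gdist_def using pow_sym by metis

lemma canon_V2: "in_V2 m n (i,j) \<Longrightarrow> canon n (i,j) = (i,j)"
  unfolding in_V2_def canon_def by auto

lemma canon_eq:
  assumes "in_V2 m n (i,j)" "1 \<le> i'" "i' \<le> m" "(i,j) = canon n (i',j')"
  shows "i' = i \<and> j' = j"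
  using assms unfolding in_V2_def canon_def by (auto split: if_splits)

lemma nbrs:
  assumes A: "\<forall>t\<in>{1..m}. odd (n t) \<and> n t \<ge> 3" and u: "in_V2 m n (i,j)"
  shows "chain_adj m n (i,j) w \<longleftrightarrow> w = canon n (i, j mod n i + 1) \<or> w = canon n (i, if j = 1 then n i else j - 1)"
proof -
  have ij: "1 \<le> i" "i \<le> m" "1 \<le> j" "j \<le> n i" using u unfolding in_V2_def by auto
  have np: "n i \<ge> 3" using A ij by auto
  let ?p = "if j = 1 then n i else j - 1"
  have pv: "1 \<le> ?p" "?p \<le> n i" using ij np by auto
  have pe: "?p mod n i + 1 = j" using ij np by (auto simp: succ_eq)
  have cu: "canon n (i,j) = (i,j)" using canon_V2[OF u] .
  show ?thesis
  proof
    assume "chain_adj m n (i,j) w"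
    then obtain i' j' where ij': "1 \<le> i'" "i' \<le> m" "1 \<le> j'" "j' \<le> n i'"
      "((i,j) = canon n (i',j') \<and> w = canon n (i', j' mod n i' + 1)) \<or> (w = canon n (i',j') \<and> (i,j) = canon n (i', j' mod n i' + 1))"
      by (rule adjE)
    show "w = canon n (i, j mod n i + 1) \<or> w = canon n (i, ?p)"
      using ij'(5)
    proof
      assume h: "(i,j) = canon n (i',j') \<and> w = canon n (i', j' mod n i' + 1)"
      then have "i' = i \<and> j' = j" using canon_eq[OF u ij'(1,2)] by blast
      then show ?thesis using h by simp
    next
      assume h: "w = canon n (i',j') \<and> (i,j) = canon n (i', j' mod n i' + 1)"
      then have e: "i' = i \<and> j' mod n i' + 1 = j" using canon_eq[OF u ij'(1,2)] by blast
      then have "j' = ?p" using ij'(3,4) succ_eq[OF ij'(3,4)] by (auto split: if_splits)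
      then show ?thesis using h e by simp
    qed
  next
    assume "w = canon n (i, j mod n i + 1) \<or> w = canon n (i, ?p)"
    then show "chain_adj m n (i,j) w"
    proof
      assume "w = canon n (i, j mod n i + 1)"
      then show ?thesis using edge[where i=i and m=m and j=j and n=n, OF ij] cu by simp
    next
      assume "w = canon n (i, ?p)"
      then show ?thesis using E_sym[OF edge[where i=i and m=m and j="?p" and n=n, OF ij(1,2) pv]] cu pe by simp
    qed
  qed
qed

lemma MD:
  assumes A: "\<forall>t\<in>{1..m}. odd (n t) \<and> n t \<ge> 3" and u: "in_V2 m n (i,j)" and v: "in_V2 m n (k,l)"
  shows "max_distant (chain_adj m n) (i,j) (k,l) \<longleftrightarrow> cd (n i) (port n (k,l) i) j = (n i - 1) div 2"
proof -
  have ij: "1 \<le> i" "i \<le> m" "1 \<le> j" "j \<le> n i" using u unfolding in_V2_def by auto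
  have k: "1 \<le> k" "k \<le> m" "1 \<le> l" "l \<le> n k" using v unfolding in_V2_def by auto
  have ck: "canon n (k,l) = (k,l)" using canon_V2[OF v] .
  have cu: "canon n (i,j) = (i,j)" using canon_V2[OF u] .
  have hi: "odd (n i)" "n i \<ge> 3" using A ij by auto
  let ?p = "if j = 1 then n i else j - 1"
  let ?s = "j mod n i + 1"
  have pv: "1 \<le> ?p" "?p \<le> n i" using ij hi by auto
  have sv: "1 \<le> ?s" "?s \<le> n i" using hi(2) by (auto simp: Suc_le_eq)
  have d0: "gdist (chain_adj m n) (i,j) (k,l) = F n (k,l) (i,j)"
    using gdist_sym gdist_F[OF A k ck ij] cu by metis
  have d1: "gdist (chain_adj m n) (k,l) (canon n (i,?s)) = F n (k,l) (i,?s)"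
    using gdist_F[OF A k ck ij(1,2) sv] .
  have d2: "gdist (chain_adj m n) (k,l) (canon n (i,?p)) = F n (k,l) (i,?p)"
    using gdist_F[OF A k ck ij(1,2) pv] .
  have "max_distant (chain_adj m n) (i,j) (k,l) \<longleftrightarrow>
     (gdist (chain_adj m n) (k,l) (canon n (i,?s)) \<le> gdist (chain_adj m n) (i,j) (k,l) \<and>
      gdist (chain_adj m n) (k,l) (canon n (i,?p)) \<le> gdist (chain_adj m n) (i,j) (k,l))"
    unfolding max_distant_def nbrs[OF A u] by blast
  also have "\<dots> \<longleftrightarrow> (F n (k,l) (i,?s) \<le> F n (k,l) (i,j) \<and> F n (k,l) (i,?p) \<le> F n (k,l) (i,j))"
    by (simp only: d0 d1 d2)
  also have "\<dots> \<longleftrightarrow> (cd (n i) (port n (k,l) i) ?s \<le> cd (n i) (port n (k,l) i) j \<and> cd (n i) (port n (k,l) i) ?p \<le> cd (n i) (port n (k,l) i) j)"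
    using F_port[of n "(k,l)" i ?s] F_port[of n "(k,l)" i ?p] F_port[of n "(k,l)" i j] by linarith
  also have "\<dots> \<longleftrightarrow> cd (n i) (port n (k,l) i) j = (n i - 1) div 2"
    using cd_maxdist[OF _ _ ij(3,4) hi] port_valid[OF A ij(1,2), of "(k,l)"] k by simp
  finally show ?thesis .
qed

theorem theorem3p6:
  fixes m :: nat and n :: "nat \<Rightarrow> nat" and i j k l :: nat
  assumes "m \<ge> 2"
    and "\<forall>t\<in>{1..m}. odd (n t) \<and> n t \<ge> 3"
    and "in_V2 m n (i, j)" and "in_V2 m n (k, l)"
    and "(i, j) \<noteq> (k, l)"
  shows "(i = k \<longrightarrow>
           (mutually_max_distant (chain_adj m n) (i, j) (i, l) \<longleftrightarrow>
            gdist (chain_adj m n) (i, j) (i, l) = (n i - 1) div 2))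
       \<and> (i < k \<and> i = 1 \<and> k = m \<longrightarrow>
           (mutually_max_distant (chain_adj m n) (i, j) (k, l) \<longleftrightarrow>
            j \<in> {1, 2} \<and> l \<in> {(n m + 1) div 2, (n m + 1) div 2 + 1}))
       \<and> (i < k \<and> i = 1 \<and> 2 \<le> k \<and> k \<le> m - 1 \<longrightarrow>
           (mutually_max_distant (chain_adj m n) (i, j) (k, l) \<longleftrightarrow>
            j \<in> {1, 2} \<and> l = (n k + 1) div 2))
       \<and> (i < k \<and> 2 \<le> i \<and> i \<le> m - 1 \<and> k = m \<longrightarrow>
           (mutually_max_distant (chain_adj m n) (i, j) (k, l) \<longleftrightarrow>
            j = 2 \<and> l \<in> {(n m + 1) div 2, (n m + 1) div 2 + 1}))
       \<and> (2 \<le> i \<and> i < k \<and> k \<le> m - 1 \<longrightarrow>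
           (mutually_max_distant (chain_adj m n) (i, j) (k, l) \<longleftrightarrow>
            j = 2 \<and> l = (n k + 1) div 2))"
  proof -
  have u: "in_V2 m n (i,j)" and v: "in_V2 m n (k,l)" using assms by auto
  have A: "\<forall>t\<in>{1..m}. odd (n t) \<and> n t \<ge> 3" using assms(2) .
  have ij: "1 \<le> i" "i \<le> m" "1 \<le> j" "j \<le> n i" using u unfolding in_V2_def by auto
  have kl: "1 \<le> k" "k \<le> m" "1 \<le> l" "l \<le> n k" using v unfolding in_V2_def by auto
  have hi: "odd (n i)" "n i \<ge> 3" using A ij by auto
  have hk: "odd (n k)" "n k \<ge> 3" using A kl by auto
  have vj: "2 \<le> i \<Longrightarrow> j \<noteq> 1" using u unfolding in_V2_def by auto
  have vl: "k \<le> m - 1 \<Longrightarrow> l \<noteq> (n k + 1) div 2 + 1" using v unfolding in_V2_def by auto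
  have a: "mutually_max_distant (chain_adj m n) (i, j) (i, l) \<longleftrightarrow>
            gdist (chain_adj m n) (i, j) (i, l) = (n i - 1) div 2" if "i = k"
  proof -
    have g: "gdist (chain_adj m n) (i, j) (i, l) = cd (n i) j l"
      using gdist_F[OF A ij canon_V2[OF u], of i l] kl that canon_V2[OF v] by (simp add: F_def)
    have v': "in_V2 m n (i,l)" using v that by simp
    show ?thesis unfolding mutually_max_distant_def MD[OF A u v'] MD[OF A v' u] g
      by (simp add: port_def cd_sym)
  qed
  have b: "mutually_max_distant (chain_adj m n) (i, j) (k, l) \<longleftrightarrow>
            j \<in> {1, 2} \<and> l \<in> {(n k + 1) div 2, (n k + 1) div 2 + 1}" if "i < k"
  proof -
    have "port n (k,l) i = (n i + 1) div 2 + 1" "port n (i,j) k = 1" using that by (auto simp: port_def)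
    then show ?thesis unfolding mutually_max_distant_def MD[OF A u v] MD[OF A v u]
      using cd_port1[OF ij(3,4) hi] cd_port2[OF kl(3,4) hk] by simp
  qed
  show ?thesis
    using a b vj vl by auto
qed

end
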